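(* If $\mathrm{char}(\Bbbk)=2$, then $P$ is minimally generated by $g_1=z^2+x^2y+y^5z^3$ and $g_2=y^3+x^4+y^3z^5+x^2y^4z^3$; in particular $\mu(P)=2$.
   Context: $\Bbbk$ is a field. $\rho:\Bbbk[[x,y,z]]\to\Bbbk[[t]]$ is the $\Bbbk$-algebra morphism with $\rho(x)=t^6+t^{31}$, $\rho(y)=t^8$, $\rho(z)=t^{10}$, and $P=\ker\rho$. $\mu(P)$ is the minimal number of generators of $P$. *)

theory Defs
  imports "HOL-Computational_Algebra.Formal_Power_Series"
begin

text \<open>The power series ring k[[x,y,z]] is realised as the iterated power series
ring ((k[[x]])[[y]])[[z]]: the outermost variable is z, then y, innermost x.\<close>

type_synonym 'a fps3 = "'a fps fps fps"

definition X3 :: "'a::comm_ring_1 fps3" where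
  "X3 = fps_const (fps_const fps_X)"

definition Y3 :: "'a::comm_ring_1 fps3" where
  "Y3 = fps_const fps_X"

definition Z3 :: "'a::comm_ring_1 fps3" where
  "Z3 = fps_X"

definition coeff3 :: "'a fps3 \<Rightarrow> nat \<Rightarrow> nat \<Rightarrow> nat \<Rightarrow> 'a" where
  "coeff3 f i j k = fps_nth (fps_nth (fps_nth f k) j) i"

text \<open>The substitution morphism rho: x |-> t^6 + t^31, y |-> t^8, z |-> t^10.
Coefficient of t^n of rho f is a finite sum, since the monomial x^i y^j z^k
maps to a series of order 6i+8j+10k; summing over i,j,k <= n captures all
contributing terms.\<close>
definition rho :: "'a::comm_ring_1 fps3 \<Rightarrow> 'a fps" where
  "rho f = Abs_fps (\<lambda>n. \<Sum>(i,j,k) \<in> {..n} \<times> {..n} \<times> {..n}.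
      coeff3 f i j k * (fps_nth ((fps_X ^ 6 + fps_X ^ 31) ^ i * fps_X ^ (8*j + 10*k)) n))"

definition P_ideal :: "'a::comm_ring_1 fps3 set" where
  "P_ideal = {f. rho f = 0}"

definition ideal_of_list :: "'b::comm_ring_1 list \<Rightarrow> 'b set" where
  "ideal_of_list gs = {\<Sum>i<length gs. c i * gs ! i | c. True}"

definition mu :: "'b::comm_ring_1 set \<Rightarrow> nat" where
  "mu I = (LEAST n. \<exists>gs. length gs = n \<and> I = ideal_of_list gs)"

end

theory Submission
  imports Defs
begin


definition mk3 :: "(nat \<Rightarrow> nat \<Rightarrow> nat \<Rightarrow> 'a) \<Rightarrow> 'a fps3" where
  "mk3 c = Abs_fps (\<lambda>k. Abs_fps (\<lambda>j. Abs_fps (\<lambda>i. c i j k)))"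

lemma coeff3_mk3[simp]: "coeff3 (mk3 c) i j k = c i j k"
  by (simp add: mk3_def coeff3_def)

lemma coeff3_eqI: "(\<And>i j k. coeff3 f i j k = coeff3 g i j k) \<Longrightarrow> f = g"
  unfolding coeff3_def by (rule fps_ext, rule fps_ext, rule fps_ext) simp

lemma coeff3_add[simp]: "coeff3 (f + g) i j k = coeff3 f i j k + coeff3 g i j k"
  by (simp add: coeff3_def)
lemma coeff3_diff[simp]: "coeff3 (f - g) i j k = coeff3 f i j k - coeff3 (g::'a::ring fps3) i j k"
  by (simp add: coeff3_def)
lemma coeff3_uminus[simp]: "coeff3 (- f) i j k = - coeff3 (f::'a::ring fps3) i j k"
  by (simp add: coeff3_def)
lemma coeff3_zero[simp]: "coeff3 0 i j k = 0"
  by (simp add: coeff3_def)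
lemma coeff3_sum[simp]: "coeff3 (sum h S) i j k = (\<Sum>m\<in>S. coeff3 (h m) i j k)"
  by (simp add: coeff3_def fps_sum_nth)

definition mon3 :: "nat \<Rightarrow> nat \<Rightarrow> nat \<Rightarrow> 'a::comm_ring_1 fps3" where
  "mon3 a b c = X3^a * Y3^b * Z3^c"

lemma coeff3_mono_mult:
  "coeff3 (mon3 a b c * h) i j k =
     (if a \<le> i \<and> b \<le> j \<and> c \<le> k then coeff3 h (i-a) (j-b) (k-c) else 0)"
proof -
  have "mon3 a b c * h = fps_const (fps_const (fps_X^a) * fps_X^b) * (fps_X^c * h)"
    by (simp add: mon3_def X3_def Y3_def Z3_def fps_const_power mult.assoc)
  then show ?thesis
    by (auto simp: coeff3_def fps_X_power_mult_nth mult.assoc)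
qed

lemma coeff3_one: "coeff3 (1::'a::comm_ring_1 fps3) i j k = (if i = 0 \<and> j = 0 \<and> k = 0 then 1 else 0)"
  by (simp add: coeff3_def)

lemma coeff3_mono:
  "coeff3 (mon3 a b c :: 'a::comm_ring_1 fps3) i j k = (if i = a \<and> j = b \<and> k = c then 1 else 0)"
  using coeff3_mono_mult[of a b c 1 i j k] by (auto simp: coeff3_one)

lemma coeff3_mult:
  "coeff3 (f * g) i j k = (\<Sum>(i1,j1,k1) \<in> {..i}\<times>{..j}\<times>{..k}.
      coeff3 f i1 j1 k1 * coeff3 (g::'a::comm_ring_1 fps3) (i-i1) (j-j1) (k-k1))"
proof -
  have "coeff3 (f * g) i j k = (\<Sum>k1\<le>k. \<Sum>j1\<le>j. \<Sum>i1\<le>i.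
      coeff3 f i1 j1 k1 * coeff3 g (i-i1) (j-j1) (k-k1))"
    by (simp add: coeff3_def fps_mult_nth fps_sum_nth atLeast0AtMost)
  also have "\<dots> = (\<Sum>k1\<le>k. \<Sum>(j1,i1)\<in>{..j}\<times>{..i}.
      coeff3 f i1 j1 k1 * coeff3 g (i-i1) (j-j1) (k-k1))"
    by (simp add: sum.cartesian_product)
  also have "\<dots> = (\<Sum>(k1,j1,i1)\<in>{..k}\<times>{..j}\<times>{..i}.
      coeff3 f i1 j1 k1 * coeff3 g (i-i1) (j-j1) (k-k1))"
    by (simp add: sum.cartesian_product)
  also have "\<dots> = (\<Sum>(i1,j1,k1) \<in> {..i}\<times>{..j}\<times>{..k}.
      coeff3 f i1 j1 k1 * coeff3 g (i-i1) (j-j1) (k-k1))"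
    by (rule sum.reindex_bij_witness[of _ "\<lambda>(i1,j1,k1). (k1,j1,i1)" "\<lambda>(k1,j1,i1). (i1,j1,k1)"]) auto
  finally show ?thesis .
qed



type_synonym tri = "nat \<times> nat \<times> nat"

fun cf :: "'a fps3 \<Rightarrow> tri \<Rightarrow> 'a" where "cf f (i,j,k) = coeff3 f i j k"
fun tadd :: "tri \<Rightarrow> tri \<Rightarrow> tri" where "tadd (i,j,k) (i',j',k') = (i+i',j+j',k+k')"
fun wt :: "tri \<Rightarrow> nat" where "wt (i,j,k) = 6*i+8*j+10*k"
definition Dec :: "tri \<Rightarrow> (tri \<times> tri) set" where "Dec a = {(b,d). tadd b d = a}"
definition box :: "nat \<Rightarrow> tri set" where "box n = {..n}\<times>{..n}\<times>{..n}"

lemma finite_box[simp]: "finite (box n)" by (simp add: box_def)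

lemma Dec_sub: "Dec (i,j,k) \<subseteq> ({..i}\<times>{..j}\<times>{..k}) \<times> ({..i}\<times>{..j}\<times>{..k})"
  by (auto simp: Dec_def)

lemma finite_Dec[simp]: "finite (Dec a)"
  using Dec_sub[of "fst a" "fst (snd a)" "snd (snd a)"] by (auto intro: finite_subset)

lemma cf_mult: "cf (f*g) a = (\<Sum>(b,d)\<in>Dec a. cf f b * cf (g::'a::comm_ring_1 fps3) d)"
proof (cases a)
  case (fields i j k)
  have "cf (f*g) a = (\<Sum>(i1,j1,k1) \<in> {..i}\<times>{..j}\<times>{..k}.
      coeff3 f i1 j1 k1 * coeff3 (g::'a::comm_ring_1 fps3) (i-i1) (j-j1) (k-k1))"
    using fields by (simp add: coeff3_mult)
  also have "\<dots> = (\<Sum>(b,d)\<in>Dec a. cf f b * cf g d)"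
    by (rule sum.reindex_bij_witness[of _ "\<lambda>(b,d). b" "\<lambda>(i1,j1,k1). ((i1,j1,k1),(i-i1,j-j1,k-k1))"])
       (auto simp: Dec_def fields)
  finally show ?thesis .
qed

definition Mf :: "nat \<Rightarrow> nat \<Rightarrow> nat \<Rightarrow> 'a::comm_ring_1 fps" where
  "Mf i j k = (fps_X ^ 6 + fps_X ^ 31) ^ i * fps_X ^ (8*j + 10*k)"

fun MF :: "tri \<Rightarrow> 'a::comm_ring_1 fps" where "MF (i,j,k) = Mf i j k"

lemma Mf_eq: "Mf i j k = fps_X^(6*i+8*j+10*k) * (1 + fps_X^25)^i"
proof -
  have "(fps_X ^ 6 + fps_X ^ 31 :: 'a fps) = fps_X^6 * (1 + fps_X^25)"
    by (simp add: algebra_simps power_add[symmetric])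
  then have "Mf i j k = (fps_X^6 * (1 + fps_X^25))^i * (fps_X ^ (8*j + 10*k) :: 'a fps)"
    unfolding Mf_def by simp
  also have "\<dots> = fps_X^(6*i) * (1 + fps_X^25)^i * fps_X ^ (8*j + 10*k)"
    by (simp add: power_mult_distrib power_mult)
  also have "\<dots> = fps_X^(6*i+8*j+10*k) * (1 + fps_X^25)^i"
    by (simp add: power_add algebra_simps)
  finally show ?thesis .
qed

lemma Mf_nth_zero: "n < 6*i+8*j+10*k \<Longrightarrow> fps_nth (Mf i j k) n = 0"
  by (simp add: Mf_eq fps_X_power_mult_nth)

lemma MF_nth_zero: "n < wt a \<Longrightarrow> fps_nth (MF a) n = 0"
  by (cases a) (simp add: Mf_nth_zero)

lemma MF_tadd: "MF (tadd a b) = MF a * MF b"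
  by (cases a, cases b) (simp add: Mf_def power_add algebra_simps)

lemma rho_nth: "fps_nth (rho f) n = (\<Sum>a\<in>box n. cf f a * fps_nth (MF a) n)"
  unfolding rho_def box_def
  by (simp, rule sum.cong[OF refl]) (clarsimp simp: Mf_def)

lemma rho_nth_superset:
  assumes "finite S" "{a. wt a \<le> n} \<subseteq> S"
  shows "fps_nth (rho f) n = (\<Sum>a\<in>S. cf f a * fps_nth (MF a) n)"
proof -
  have T: "{a. wt a \<le> n} \<subseteq> box n"
    by (auto simp: box_def)
  have "fps_nth (rho f) n = (\<Sum>a\<in>{a. wt a \<le> n}. cf f a * fps_nth (MF a) n)"
    unfolding rho_nth
    by (rule sum.mono_neutral_right) (use T in \<open>auto simp: MF_nth_zero\<close>)
  also have "\<dots> = (\<Sum>a\<in>S. cf f a * fps_nth (MF a) n)"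
    by (rule sum.mono_neutral_left) (use assms in \<open>auto simp: MF_nth_zero\<close>)
  finally show ?thesis .
qed

lemma cf_add[simp]: "cf (f + g) a = cf f a + cf g a" by (cases a) simp
lemma cf_diff[simp]: "cf (f - g) a = cf f a - cf (g::'a::ring fps3) a" by (cases a) simp
lemma cf_uminus[simp]: "cf (- f) a = - cf (f::'a::ring fps3) a" by (cases a) simp
lemma cf_zero[simp]: "cf 0 a = 0" by (cases a) simp
lemma cf_sum[simp]: "cf (sum h S) a = (\<Sum>m\<in>S. cf (h m) a)" by (cases a) simp

lemma rho_add: "rho (f + g) = rho f + rho g"
  by (rule fps_ext) (simp add: rho_nth sum.distrib[symmetric] distrib_right)

lemma rho_diff: "rho (f - g) = rho f - rho (g :: 'a::comm_ring_1 fps3)"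
  by (rule fps_ext) (simp add: rho_nth sum_subtractf[symmetric] left_diff_distrib)

lemma rho_zero: "rho 0 = 0"
  by (rule fps_ext) (simp add: rho_nth)

lemma wt_box: "wt a \<le> n \<Longrightarrow> a \<in> box n"
  by (cases a) (auto simp: box_def)
lemma not_box_wt: "a \<notin> box n \<Longrightarrow> n < wt a"
  by (cases a) (auto simp: box_def)
lemma tadd_box: "tadd b d \<in> box n \<Longrightarrow> b \<in> box n \<and> d \<in> box n"
  by (cases b, cases d) (auto simp: box_def)

lemma rho_mult: "rho (f * g) = rho f * rho (g::'a::comm_ring_1 fps3)"
proof (rule fps_ext)
  fix n
  let ?B = "box n"
  let ?F = "\<lambda>b d. cf f b * cf g d * fps_nth (MF (tadd b d)) n"
  have "fps_nth (rho (f*g)) n = (\<Sum>a\<in>?B. \<Sum>(b,d)\<in>Dec a. cf f b * cf g d * fps_nth (MF a) n)"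
    by (simp add: rho_nth cf_mult sum_distrib_right case_prod_unfold)
  also have "\<dots> = (\<Sum>(a,bd)\<in>Sigma ?B Dec. case bd of (b,d) \<Rightarrow> cf f b * cf g d * fps_nth (MF a) n)"
    by (simp add: sum.Sigma)
  also have "\<dots> = (\<Sum>(b,d)\<in>{(b,d). tadd b d \<in> ?B}. ?F b d)"
    by (rule sum.reindex_bij_witness[of _ "\<lambda>(b,d). (tadd b d, (b,d))" "\<lambda>(a,bd). bd"])
       (auto simp: Dec_def)
  also have "\<dots> = (\<Sum>(b,d)\<in>?B\<times>?B. ?F b d)"
  proof (rule sum.mono_neutral_left)
    show "\<forall>x\<in>?B \<times> ?B - {(b, d). tadd b d \<in> ?B}. (case x of (b, d) \<Rightarrow> ?F b d) = 0"
    proof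
      fix x assume "x \<in> ?B \<times> ?B - {(b, d). tadd b d \<in> ?B}"
      then obtain b d where x: "x = (b,d)" "tadd b d \<notin> ?B" by auto
      show "(case x of (b, d) \<Rightarrow> ?F b d) = 0"
        unfolding x(1) prod.case MF_nth_zero[OF not_box_wt[OF x(2)]] by (rule mult_zero_right)
    qed
  qed (auto dest: tadd_box)
  also have "\<dots> = (\<Sum>b\<in>?B. \<Sum>d\<in>?B. \<Sum>p\<le>n. (cf f b * fps_nth (MF b) p) * (cf g d * fps_nth (MF d) (n-p)))"
    by (simp add: sum.cartesian_product[symmetric] MF_tadd fps_mult_nth atLeast0AtMost
         sum_distrib_left mult_ac)
  also have "\<dots> = (\<Sum>p\<le>n. (\<Sum>b\<in>?B. cf f b * fps_nth (MF b) p) * (\<Sum>d\<in>?B. cf g d * fps_nth (MF d) (n-p)))"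
    by (simp add: sum_product sum.swap[of _ "{..n}"])
  also have "\<dots> = (\<Sum>p\<le>n. fps_nth (rho f) p * fps_nth (rho g) (n-p))"
    by (intro sum.cong refl arg_cong2[where f="(*)"] rho_nth_superset[symmetric])
       (auto intro: wt_box)
  also have "\<dots> = fps_nth (rho f * rho g) n"
    by (simp add: fps_mult_nth atLeast0AtMost)
  finally show "fps_nth (rho (f * g)) n = fps_nth (rho f * rho g) n" .
qed



lemma cf_mono: "cf (mon3 a b c :: 'a::comm_ring_1 fps3) x = (if x = (a,b,c) then 1 else 0)"
  by (cases x) (simp add: coeff3_mono)

lemma rho_mono: "rho (mon3 a b c :: 'a::comm_ring_1 fps3) = Mf a b c"
proof (rule fps_ext)
  fix n
  have "fps_nth (rho (mon3 a b c :: 'a fps3)) n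
      = (\<Sum>x\<in>insert (a,b,c) (box n). cf (mon3 a b c :: 'a fps3) x * fps_nth (MF x) n)"
    by (rule rho_nth_superset) (auto intro: wt_box)
  also have "\<dots> = fps_nth (Mf a b c) n"
  proof -
    have "\<And>x. cf (mon3 a b c :: 'a fps3) x * fps_nth (MF x) n = (if x = (a,b,c) then fps_nth (Mf a b c) n else 0)"
      by (simp add: cf_mono)
    then show ?thesis by (simp add: sum.delta')
  qed
  finally show "fps_nth (rho (mon3 a b c :: 'a fps3)) n = fps_nth (Mf a b c) n" .
qed

definition G1 :: "'a::comm_ring_1 fps3" where "G1 = mon3 0 0 2 + mon3 2 1 0 + mon3 0 5 3"
definition G2 :: "'a::comm_ring_1 fps3" where "G2 = mon3 0 3 0 + mon3 4 0 0 + mon3 0 3 5 + mon3 2 4 3"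

lemma G1_eq: "Z3^2 + X3^2 * Y3 + Y3^5 * Z3^3 = G1"
  by (simp add: G1_def mon3_def)
lemma G2_eq: "Y3^3 + X3^4 + Y3^3 * Z3^5 + X3^2 * Y3^4 * Z3^3 = G2"
  by (simp add: G2_def mon3_def)

lemma two_fps_zero: assumes "(2::'a::comm_ring_1) = 0" shows "(2::'a fps) = 0"
  by (rule fps_ext) (simp add: fps_numeral_nth assms)

lemma rho_G1: assumes "(2::'a::comm_ring_1) = 0" shows "rho (G1::'a fps3) = 0"
proof -
  let ?x = "fps_X :: 'a fps"
  have "rho (G1::'a fps3) = (?x^6+?x^31)^2*?x^8 + ?x^20 + ?x^40*?x^30"
    by (simp add: G1_def rho_add rho_mono Mf_def power_add)
  also have "\<dots> = 2*(?x^20+?x^45+?x^70)"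
    by (simp add: power2_eq_square algebra_simps flip: power_add)
  finally show ?thesis using two_fps_zero[OF assms] by simp
qed

lemma rho_G2: assumes "(2::'a::comm_ring_1) = 0" shows "rho (G2::'a fps3) = 0"
proof -
  let ?x = "fps_X :: 'a fps"
  have "rho (G2::'a fps3) = ?x^24 + (?x^6+?x^31)^4 + ?x^24*?x^50 + (?x^6+?x^31)^2*?x^(32+30)"
    by (simp add: G2_def rho_add rho_mono Mf_def power_add)
  also have "\<dots> = 2*(?x^24 + 2*?x^49 + 4*?x^74 + 3*?x^99 + ?x^124)"
  proof -
    have "(?x^6+?x^31)^4 = ((?x^6+?x^31)^2)^2" by (simp flip: power_mult)
    then show ?thesis by (simp add: power2_eq_square algebra_simps flip: power_add)
  qed
  finally show ?thesis using two_fps_zero[OF assms] by simp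
qed

lemma ideal_sub_P:
  assumes "(2::'a::comm_ring_1) = 0"
  shows "ideal_of_list [G1, G2] \<subseteq> (P_ideal :: 'a fps3 set)"
proof
  fix h :: "'a fps3" assume "h \<in> ideal_of_list [G1, G2]"
  then obtain c where "h = c 0 * G1 + c (Suc 0) * G2"
    by (auto simp: ideal_of_list_def)
  then show "h \<in> P_ideal"
    by (simp add: P_ideal_def rho_add rho_mult rho_G1[OF assms] rho_G2[OF assms])
qed



definition Zp :: "'a::comm_ring_1 fps3 \<Rightarrow> 'a fps3" where
  "Zp f = mk3 (\<lambda>i j k. coeff3 f i j (k+2))"
definition Yp :: "'a::comm_ring_1 fps3 \<Rightarrow> 'a fps3" where
  "Yp f = mk3 (\<lambda>i j k. if k < 2 then coeff3 f i (j+3) k else 0)"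
definition Np :: "'a::comm_ring_1 fps3 \<Rightarrow> 'a fps3" where
  "Np f = mk3 (\<lambda>i j k. if j < 3 \<and> k < 2 then coeff3 f i j k else 0)"

lemma decomp: "f = mon3 0 0 2 * Zp f + mon3 0 3 0 * Yp f + Np f"
proof (rule coeff3_eqI)
  fix i j k
  show "coeff3 f i j k = coeff3 (mon3 0 0 2 * Zp f + mon3 0 3 0 * Yp f + Np f) i j k"
  proof (cases "k < 2")
    case False
    then obtain k' where "k = k' + 2" by (metis add.commute le_Suc_ex not_less)
    then show ?thesis by (simp add: coeff3_mono_mult Zp_def Yp_def Np_def)
  qed (auto simp: coeff3_mono_mult Zp_def Yp_def Np_def)
qed

definition R1 :: "'a::comm_ring_1 fps3" where "R1 = mon3 2 1 0 + mon3 0 5 3"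
definition R2 :: "'a::comm_ring_1 fps3" where "R2 = mon3 4 0 0 + mon3 0 3 5 + mon3 2 4 3"

definition Tf :: "'a::comm_ring_1 fps3 \<Rightarrow> 'a fps3" where
  "Tf f = - (R1 * Zp f + R2 * Yp f)"

lemma key: "f = Zp f * G1 + Yp f * G2 + Np f + Tf f"
proof -
  have eG: "G1 = mon3 0 0 2 + (R1::'a fps3)" "G2 = mon3 0 3 0 + (R2::'a fps3)"
    by (simp_all add: G1_def G2_def R1_def R2_def algebra_simps)
  show ?thesis
    by (subst (1) decomp[of f]) (simp add: Tf_def eG algebra_simps)
qed

definition ordge :: "'a::zero fps3 \<Rightarrow> nat \<Rightarrow> bool" where
  "ordge f d \<longleftrightarrow> (\<forall>i j k. i+j+k < d \<longrightarrow> coeff3 f i j k = 0)"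

lemma ordge_mono_mult: "ordge h e \<Longrightarrow> ordge (mon3 a b c * h) (e + a + b + c)"
  unfolding ordge_def coeff3_mono_mult by auto

lemma ordge_add: "ordge f d \<Longrightarrow> ordge g d \<Longrightarrow> ordge (f + g :: 'a::comm_ring_1 fps3) d"
  by (simp add: ordge_def)
lemma ordge_diff: "ordge f d \<Longrightarrow> ordge g d \<Longrightarrow> ordge (f - g :: 'a::ring fps3) d"
  by (simp add: ordge_def)
lemma ordge_uminus: "ordge f d \<Longrightarrow> ordge (- f :: 'a::ring fps3) d"
  by (simp add: ordge_def)
lemma ordge_le: "ordge f d \<Longrightarrow> d' \<le> d \<Longrightarrow> ordge f d'"
  by (simp add: ordge_def)

lemma ordge_Zp: "ordge f d \<Longrightarrow> ordge (Zp f) (d - 2)"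
  by (simp add: ordge_def Zp_def)
lemma ordge_Yp: "ordge f d \<Longrightarrow> ordge (Yp f) (d - 3)"
  by (simp add: ordge_def Yp_def)
lemma ordge_Np: "ordge f d \<Longrightarrow> ordge (Np f) d"
  by (simp add: ordge_def Np_def)

lemma ordge_mono_mult': "ordge h e \<Longrightarrow> d \<le> e + a + b + c \<Longrightarrow> ordge (mon3 a b c * h) d"
  using ordge_mono_mult ordge_le by blast

lemma ordge_Tf: assumes "ordge f d" shows "ordge (Tf f) (Suc d)"
proof -
  have z: "ordge (Zp f) (d-2)" and y: "ordge (Yp f) (d-3)"
    using ordge_Zp[OF assms] ordge_Yp[OF assms] .
  show ?thesis
    unfolding Tf_def R1_def R2_def distrib_right
    by (intro ordge_uminus ordge_add ordge_mono_mult'[OF z] ordge_mono_mult'[OF y]) auto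
qed

lemma ordge_mult_G1: assumes "ordge h e" shows "ordge (h * G1) e"
proof -
  have "h * G1 = mon3 0 0 2 * h + mon3 2 1 0 * h + mon3 0 5 3 * h"
    by (simp add: G1_def algebra_simps)
  then show ?thesis by (simp only:) (intro ordge_add ordge_mono_mult'[OF assms]; simp)
qed
lemma ordge_mult_G2: assumes "ordge h e" shows "ordge (h * G2) e"
proof -
  have "h * G2 = mon3 0 3 0 * h + mon3 4 0 0 * h + mon3 0 3 5 * h + mon3 2 4 3 * h"
    by (simp add: G2_def algebra_simps)
  then show ?thesis by (simp only:) (intro ordge_add ordge_mono_mult'[OF assms]; simp)
qed

lemma ordge_all_zero: "(\<And>n. ordge f n) \<Longrightarrow> f = 0"
  by (rule coeff3_eqI) (auto simp: ordge_def)

definition Ssum :: "(nat \<Rightarrow> 'a::comm_ring_1 fps3) \<Rightarrow> 'a fps3" where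
  "Ssum h = mk3 (\<lambda>i j k. \<Sum>m < i+j+k+4. coeff3 (h m) i j k)"

lemma Ssum_tail:
  assumes "\<And>m. ordge (h m) (m - 3)"
  shows "ordge (Ssum h - (\<Sum>m<n. h m)) (n - 3)"
  unfolding ordge_def
proof (intro allI impI)
  fix i j k assume ijk: "i + j + k < n - 3"
  have "(\<Sum>m<n. coeff3 (h m) i j k) = (\<Sum>m < i+j+k+4. coeff3 (h m) i j k)"
  proof (rule sum.mono_neutral_right)
    show "\<forall>m\<in>{..<n} - {..<i+j+k+4}. coeff3 (h m) i j k = 0"
      using assms ijk unfolding ordge_def by auto
  qed (use ijk in auto)
  then show "coeff3 (Ssum h - (\<Sum>m<n. h m)) i j k = 0"
    by (simp add: Ssum_def)
qed

lemma division:
  fixes f :: "'a::comm_ring_1 fps3"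
  shows "\<exists>c1 c2 N. f = c1 * G1 + c2 * G2 + N \<and> (\<forall>i j k. coeff3 N i j k \<noteq> 0 \<longrightarrow> j < 3 \<and> k < 2)"
proof -
  define F where "F n = (Tf ^^ n) f" for n
  have ordF: "ordge (F n) n" for n
  proof (induction n)
    case 0 show ?case by (simp add: F_def ordge_def)
  next
    case (Suc n) then show ?case using ordge_Tf[of "F n"] by (simp add: F_def)
  qed
  have part: "f = (\<Sum>m<n. Zp (F m) * G1 + Yp (F m) * G2 + Np (F m)) + F n" for n
  proof (induction n)
    case 0 then show ?case by (simp add: F_def)
  next
    case (Suc n)
    have "F (Suc n) = Tf (F n)" by (simp add: F_def)
    then show ?case using Suc key[of "F n"] by (simp add: algebra_simps)
  qed
  define C1 where "C1 = Ssum (\<lambda>m. Zp (F m))"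
  define C2 where "C2 = Ssum (\<lambda>m. Yp (F m))"
  define N where "N = Ssum (\<lambda>m. Np (F m))"
  have o1: "ordge (Zp (F m)) (m - 3)" for m using ordge_le[OF ordge_Zp[OF ordF[of m]], of "m-3"] by simp
  have o2: "ordge (Yp (F m)) (m - 3)" for m using ordge_Yp[OF ordF] .
  have o3: "ordge (Np (F m)) (m - 3)" for m using ordge_le[OF ordge_Np[OF ordF[of m]], of "m-3"] by simp
  have "ordge (f - (C1 * G1 + C2 * G2 + N)) n" for n
  proof -
    have e: "f - (C1 * G1 + C2 * G2 + N) = F (n+3)
       - (C1 - (\<Sum>m<n+3. Zp (F m))) * G1 - (C2 - (\<Sum>m<n+3. Yp (F m))) * G2
       - (N - (\<Sum>m<n+3. Np (F m)))"
      by (subst (1) part[of "n+3"]) (simp add: sum.distrib sum_distrib_right sum_distrib_left algebra_simps)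
    show ?thesis unfolding e
      apply (rule ordge_diff[OF ordge_diff[OF ordge_diff]])
         apply (rule ordge_le[OF ordF[of "n+3"]], simp)
        apply (rule ordge_mult_G1)
        defer
        apply (rule ordge_mult_G2)
      using ordF[of "n+3"] Ssum_tail[of "\<lambda>m. Zp (F m)", OF o1, of "n+3"]
        Ssum_tail[of "\<lambda>m. Yp (F m)", OF o2, of "n+3"] Ssum_tail[of "\<lambda>m. Np (F m)", OF o3, of "n+3"]
      by (auto simp: C1_def C2_def N_def intro: ordge_le)
  qed
  then have "f = C1 * G1 + C2 * G2 + N" using ordge_all_zero by fastforce
  moreover have "\<forall>i j k. coeff3 N i j k \<noteq> 0 \<longrightarrow> j < 3 \<and> k < 2"
  proof -
    have "coeff3 N i j k = 0" if "\<not> (j < 3 \<and> k < 2)" for i j k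
      using that by (auto simp: N_def Ssum_def Np_def intro!: sum.neutral)
    then show ?thesis by blast
  qed
  ultimately show ?thesis by blast
qed



lemma Mf_nth: "fps_nth (Mf i j k :: 'a::comm_ring_1 fps) m =
   (\<Sum>l\<le>i. of_nat (i choose l) * (if m = 6*i+25*l+8*j+10*k then 1 else 0))"
proof -
  have "(Mf i j k :: 'a fps) = (fps_X^31 + fps_X^6)^i * fps_X^(8*j+10*k)"
    by (simp add: Mf_def add.commute)
  also have "\<dots> = (\<Sum>l\<le>i. of_nat (i choose l) * (fps_X^31)^l * (fps_X^6)^(i-l)) * fps_X^(8*j+10*k)"
    by (simp only: binomial_ring)
  also have "\<dots> = (\<Sum>l\<le>i. fps_const (of_nat (i choose l)) * fps_X^(6*i+25*l+8*j+10*k))"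
    unfolding sum_distrib_right
  proof (intro sum.cong refl)
    fix l assume "l \<in> {..i}"
    then have e: "6*i+25*l+8*j+10*k = 31*l + 6*(i-l) + (8*j+10*k)" by simp
    show "of_nat (i choose l) * (fps_X^31)^l * (fps_X^6)^(i-l) * fps_X^(8*j+10*k)
        = fps_const (of_nat (i choose l)) * (fps_X^(6*i+25*l+8*j+10*k) :: 'a fps)"
      unfolding e power_add power_mult fps_of_nat by (simp add: mult.assoc)
  qed
  finally show ?thesis
    by (simp add: fps_sum_nth)
qed

lemma parity_l: assumes "6*i0+8*j0+10*k0+25 = 6*i+25*l+8*j+10*(k::nat)" shows "odd l"
proof -
  have "odd (6*i0+8*j0+10*k0+25::nat)" by simp
  then have "odd (6*i+25*l+8*j+10*k)" using assms by simp
  then show ?thesis by simp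
qed

lemma W12: assumes "12*p0+8*j0+10*k0 = 12*p+8*j+10*(k::nat)" "j0<3" "k0<2" "j<3" "k<2"
  shows "p=p0 \<and> j=j0 \<and> k=k0"
proof -
  have "j0 \<in> {0,1,2}" "k0 \<in> {0,1}" "j \<in> {0,1,2}" "k \<in> {0,1}" using assms by auto
  then show ?thesis using assms(1) by (auto; presburger)
qed

lemma F1: assumes "odd (i0::nat)" "j0<3" "k0<2" "j<3" "k<2" "odd i"
  "6*i0+8*j0+10*k0 \<le> 6*i+8*j+10*k" "6*i0+8*j0+10*k0+25 = 6*i+25*l+8*j+10*k"
  shows "i=i0 \<and> j=j0 \<and> k=k0 \<and> l=1"
proof -
  have "odd l" using parity_l[OF assms(8)] .
  moreover have "l \<le> 1" using assms(7,8) by linarith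
  ultimately have l: "l = 1" by presburger
  obtain p0 where p0: "i0 = 2*p0+1" using assms(1) oddE by blast
  obtain p where p: "i = 2*p+1" using assms(6) oddE by blast
  have "12*p0+8*j0+10*k0 = 12*p+8*j+10*k" using assms(8) l p p0 by simp
  with W12 assms(2-5) have "p=p0 \<and> j=j0 \<and> k=k0" by blast
  with l p p0 show ?thesis by simp
qed

lemma F3: assumes "even (i0::nat)" "j0<3" "k0<2" "j<3" "k<2" "even i"
  "6*i0+8*j0+10*k0 \<le> 6*i+8*j+10*k" "6*i0+8*j0+10*k0 = 6*i+25*l+8*j+10*k"
  shows "i=i0 \<and> j=j0 \<and> k=k0 \<and> l=0"
proof -
  have l: "l = 0" using assms(7,8) by linarith
  obtain p0 where p0: "i0 = 2*p0" using assms(1) evenE by blast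
  obtain p where p: "i = 2*p" using assms(6) evenE by blast
  have "12*p0+8*j0+10*k0 = 12*p+8*j+10*k" using assms(8) l p p0 by simp
  with W12 assms(2-5) have "p=p0 \<and> j=j0 \<and> k=k0" by blast
  with l p p0 show ?thesis by simp
qed

lemma even_binom: assumes "even (i::nat)" "odd l" shows "even (i choose l)"
proof -
  have "l > 0" using assms(2) by (cases l) auto
  then have "l * (i choose l) = i * ((i - 1) choose (l - 1))" by (rule times_binomial_minus1_eq)
  then have "even (l * (i choose l))" using assms(1) by simp
  then show ?thesis using assms(2) by simp
qed



lemma single_term:
  fixes N :: "'a::comm_ring_1 fps3"
  assumes H: "\<And>i j k l. l \<le> i \<Longrightarrow> cf N (i,j,k) \<noteq> 0 \<Longrightarrow> T = 6*i+25*l+8*j+10*k \<Longrightarrow>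
                 of_nat (i choose l) \<noteq> (0::'a) \<Longrightarrow> (i,j,k) = (i0,j0,k0) \<and> l = lz"
    and C0: "of_nat (i0 choose lz) = (1::'a)" and lz: "lz \<le> i0"
    and T: "T = 6*i0+25*lz+8*j0+10*k0"
  shows "fps_nth (rho N) T = cf N (i0,j0,k0)"
proof -
  have tm: "cf N a * fps_nth (MF a) T = (if a = (i0,j0,k0) then cf N (i0,j0,k0) else 0)" for a
  proof (cases a)
    case (fields i j k)
    have "cf N a * fps_nth (MF a) T =
       (\<Sum>l\<le>i. cf N (i,j,k) * (of_nat (i choose l) * (if T = 6*i+25*l+8*j+10*k then 1 else 0)))"
      using fields by (simp add: Mf_nth sum_distrib_left)
    also have "\<dots> = (\<Sum>l\<le>i. if a = (i0,j0,k0) \<and> l = lz then cf N (i0,j0,k0) else 0)"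
    proof (intro sum.cong refl)
      fix l assume "l \<in> {..i}"
      then have li: "l \<le> i" by simp
      show "cf N (i,j,k) * (of_nat (i choose l) * (if T = 6*i+25*l+8*j+10*k then 1 else 0))
          = (if a = (i0,j0,k0) \<and> l = lz then cf N (i0,j0,k0) else 0)"
      proof (cases "a = (i0,j0,k0) \<and> l = lz")
        case True
        with fields C0 T show ?thesis by simp
      next
        case False
        have "\<not> (cf N (i,j,k) \<noteq> 0 \<and> T = 6*i+25*l+8*j+10*k \<and> of_nat (i choose l) \<noteq> (0::'a))"
          using H[OF li] False fields by blast
        with False show ?thesis by auto
      qed
    qed
    also have "\<dots> = (if a = (i0,j0,k0) then cf N (i0,j0,k0) else 0)"
      using lz fields by (auto simp: sum.delta)
    finally show ?thesis .
  qed
  have "fps_nth (rho N) T = (\<Sum>a\<in>box T. cf N a * fps_nth (MF a) T)" by (rule rho_nth)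
  also have "\<dots> = (\<Sum>a\<in>box T. if a = (i0,j0,k0) then cf N (i0,j0,k0) else 0)"
    by (simp only: tm)
  also have "\<dots> = cf N (i0,j0,k0)"
    using wt_box[of "(i0,j0,k0)" T] T by (simp add: sum.delta)
  finally show ?thesis .
qed



lemma nz_cf:
  fixes N :: "'a::comm_ring_1 fps3"
  assumes "N \<noteq> 0" shows "\<exists>a. cf N a \<noteq> 0"
  proof -
    have "\<exists>i j k. coeff3 N i j k \<noteq> 0"
    proof (rule ccontr)
      assume "\<not> (\<exists>i j k. coeff3 N i j k \<noteq> 0)"
      then have "N = 0" by (intro coeff3_eqI) simp
      with \<open>N \<noteq> 0\<close> show False ..
    qed
    then obtain i j k where "coeff3 N i j k \<noteq> 0" by blast
    then show ?thesis by (intro exI[of _ "(i,j,k)"]) simp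
  qed

lemma char2_ofz: assumes char: "CHAR('a::comm_ring_1) = 2" shows "of_nat n = (0::'a) \<longleftrightarrow> even n"
    using char by (simp add: of_nat_eq_0_iff_char_dvd)

lemma char2_ofo: assumes char: "CHAR('a::comm_ring_1) = 2" and "odd n" shows "of_nat n = (1::'a)"
proof -
  obtain q where q: "n = 2*q + 1" using assms(2) oddE by blast
  have "of_nat (2*q) = (0::'a)" using char2_ofz[OF char, of "2*q"] by simp
  then show ?thesis unfolding q by simp
qed

lemma normal_inj2:
  fixes N :: "'a::comm_ring_1 fps3"
  assumes char: "CHAR('a) = 2"
    and nf: "\<forall>i j k. coeff3 N i j k \<noteq> 0 \<longrightarrow> j < 3 \<and> k < 2"
    and r: "rho N = 0"
  shows "N = 0"
proof (rule ccontr)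
  assume "N \<noteq> 0"
  then obtain a where a: "cf N a \<noteq> 0" using nz_cf by blast
  note ofz = char2_ofz[OF char]
  note ofo = char2_ofo[OF char]
  have nf': "j < 3 \<and> k < 2" if "cf N (i,j,k) \<noteq> 0" for i j k
    using nf that by simp
  show False
  proof (cases "\<exists>a. cf N a \<noteq> 0 \<and> odd (fst a)")
    case True
    then obtain b where "cf N b \<noteq> 0 \<and> odd (fst b)" by blast
    from ex_has_least_nat[where P="\<lambda>a. cf N a \<noteq> 0 \<and> odd (fst a)" and m=wt, OF this]
    obtain a0 where a0: "cf N a0 \<noteq> 0" "odd (fst a0)"
      and mn: "\<And>y. cf N y \<noteq> 0 \<and> odd (fst y) \<Longrightarrow> wt a0 \<le> wt y" by blast
    obtain i0 j0 k0 where a0e: "a0 = (i0,j0,k0)" by (cases a0)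
    have "fps_nth (rho N) (wt a0 + 25) = cf N (i0,j0,k0)"
    proof (rule single_term[where lz=1])
      fix i j k l assume li: "l \<le> i" and nz: "cf N (i,j,k) \<noteq> 0"
        and T: "wt a0 + 25 = 6*i+25*l+8*j+10*k" and C: "of_nat (i choose l) \<noteq> (0::'a)"
      have T': "6*i0+8*j0+10*k0+25 = 6*i+25*l+8*j+10*k" using T a0e by simp
      have lo: "odd l" using parity_l[OF T'] .
      have io: "odd i"
      proof (rule ccontr)
        assume "\<not> odd i"
        then have "even (i choose l)" using even_binom lo by blast
        with C ofz show False by simp
      qed
      have "wt a0 \<le> wt (i,j,k)" using mn[of "(i,j,k)"] nz io by simp
      then show "(i,j,k) = (i0,j0,k0) \<and> l = 1"
        using F1[of i0 j0 k0 j k i l] a0e a0 nf'[OF nz] nf'[of i0 j0 k0] T' io by simp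
    next
      show "of_nat (i0 choose 1) = (1::'a)" using ofo a0 a0e by simp
      show "1 \<le> i0" using a0 a0e by (cases i0) auto
      show "wt a0 + 25 = 6 * i0 + 25 * 1 + 8 * j0 + 10 * k0" using a0e by simp
    qed
    with r a0 a0e show False by simp
  next
    case False
    from ex_has_least_nat[where P="\<lambda>a. cf N a \<noteq> 0" and m=wt, OF a]
    obtain a0 where a0: "cf N a0 \<noteq> 0"
      and mn: "\<And>y. cf N y \<noteq> 0 \<Longrightarrow> wt a0 \<le> wt y" by blast
    obtain i0 j0 k0 where a0e: "a0 = (i0,j0,k0)" by (cases a0)
    have ev0: "even i0" using False a0 a0e by auto
    have "fps_nth (rho N) (wt a0) = cf N (i0,j0,k0)"
    proof (rule single_term[where lz=0])
      fix i j k l assume li: "l \<le> i" and nz: "cf N (i,j,k) \<noteq> 0"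
        and T: "wt a0 = 6*i+25*l+8*j+10*k" and C: "of_nat (i choose l) \<noteq> (0::'a)"
      have T': "6*i0+8*j0+10*k0 = 6*i+25*l+8*j+10*k" using T a0e by simp
      have ie: "even i" using False nz by auto
      have "wt a0 \<le> wt (i,j,k)" using mn[of "(i,j,k)"] nz by simp
      then show "(i,j,k) = (i0,j0,k0) \<and> l = 0"
        using F3[of i0 j0 k0 j k i l] a0e ev0 ie nf'[OF nz] nf'[of i0 j0 k0] a0 T' by simp
    next
      show "of_nat (i0 choose 0) = (1::'a)" by simp
      show "0 \<le> i0" by simp
      show "wt a0 = 6 * i0 + 25 * 0 + 8 * j0 + 10 * k0" using a0e by simp
    qed
    with r a0 a0e show False by simp
  qed
qed



lemma mult_G1_eq: "h * G1 = mon3 0 0 2 * h + mon3 2 1 0 * h + mon3 0 5 3 * (h::'a::comm_ring_1 fps3)"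
  by (simp add: G1_def algebra_simps)
lemma mult_G2_eq: "h * G2 = mon3 0 3 0 * h + mon3 4 0 0 * h + mon3 0 3 5 * h + mon3 2 4 3 * (h::'a::comm_ring_1 fps3)"
  by (simp add: G2_def algebra_simps)

lemma coeff3_000_mult: "coeff3 (a * b) 0 0 0 = coeff3 a 0 0 0 * coeff3 (b::'a::comm_ring_1 fps3) 0 0 0"
  by (simp add: coeff3_mult)

lemma ideal2_mem: "c1 * G1 + c2 * G2 \<in> ideal_of_list [G1, G2]"
  unfolding ideal_of_list_def
  by (rule CollectI, rule exI[of _ "\<lambda>i. if i = 0 then c1 else c2"]) (simp add: lessThan_Suc)

lemma P_eq:
  fixes dummy :: "'a::comm_ring_1"
  assumes char: "CHAR('a) = 2"
  shows "(P_ideal :: 'a fps3 set) = ideal_of_list [G1, G2]"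
proof
  have two: "(2::'a) = 0" using of_nat_CHAR[where 'a='a] char by simp
  show "ideal_of_list [G1, G2] \<subseteq> (P_ideal :: 'a fps3 set)" by (rule ideal_sub_P[OF two])
  show "(P_ideal :: 'a fps3 set) \<subseteq> ideal_of_list [G1, G2]"
  proof
    fix f :: "'a fps3" assume "f \<in> P_ideal"
    then have rf: "rho f = 0" by (simp add: P_ideal_def)
    obtain c1 c2 N where d: "f = c1 * G1 + c2 * G2 + N"
      and nf: "\<forall>i j k. coeff3 N i j k \<noteq> 0 \<longrightarrow> j < 3 \<and> k < 2"
      using division[of f] by blast
    have "N = f - c1 * G1 - c2 * G2" using d by simp
    then have "rho N = 0"
      by (simp add: rho_diff rho_mult rho_G1[OF two] rho_G2[OF two] rf)
    then have "N = 0" using normal_inj2[OF char nf] by simp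
    then show "f \<in> ideal_of_list [G1, G2]" using d ideal2_mem by simp
  qed
qed

lemma G1_nz: "(G1 :: 'a::{comm_ring_1} fps3) \<noteq> 0 \<or> (1::'a) = 0"
proof -
  have "coeff3 (G1::'a fps3) 0 0 2 = 1" by (simp add: G1_def coeff3_mono)
  then show ?thesis by auto
qed

lemma not_principal:
  fixes f :: "'a::field fps3"
  assumes "ideal_of_list [G1, G2] = ideal_of_list [f]"
  shows False
proof -
  have "G1 \<in> ideal_of_list [G1, G2]" "G2 \<in> ideal_of_list [G1, G2]"
    using ideal2_mem[of 1 0] ideal2_mem[of 0 1] by simp_all
  then have G1m: "G1 \<in> ideal_of_list [f]" "G2 \<in> ideal_of_list [f]"
    by (simp_all add: assms[symmetric])
  then obtain a b where a: "G1 = a * f" and b: "G2 = b * f"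
    by (auto simp: ideal_of_list_def)
  have "f \<in> ideal_of_list [G1, G2]"
    using assms by (auto simp: ideal_of_list_def intro!: exI[of _ "\<lambda>i. 1"])
  then obtain c where c: "f = c 0 * G1 + c (Suc 0) * G2"
    by (auto simp: ideal_of_list_def)
  have e1: "a * G2 = b * G1" unfolding a b by (simp add: algebra_simps)
  have "coeff3 (a * G2) 0 3 0 = coeff3 (b * G1) 0 3 0" using e1 by simp
  then have a0: "coeff3 a 0 0 0 = 0"
    by (simp add: mult_G1_eq mult_G2_eq coeff3_mono_mult)
  have "G1 = (a * c 0) * G1 + (a * c (Suc 0)) * G2" using a c by (simp add: algebra_simps)
  then have "coeff3 G1 0 0 2 = coeff3 ((a * c 0) * G1 + (a * c (Suc 0)) * G2) 0 0 2" by simp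
  then have "(1::'a) = coeff3 a 0 0 0 * coeff3 (c 0) 0 0 0"
    by (simp add: mult_G1_eq mult_G2_eq coeff3_mono_mult coeff3_000_mult)
      (simp add: G1_def coeff3_mono)
  with a0 show False by simp
qed

lemma mu_eq:
  fixes dummy :: "'a::field"
  assumes "(P_ideal :: 'a fps3 set) = ideal_of_list [G1, G2]"
  shows "mu (P_ideal :: 'a fps3 set) = 2"
  unfolding mu_def
proof (rule Least_equality)
  show "\<exists>gs. length gs = 2 \<and> (P_ideal :: 'a fps3 set) = ideal_of_list gs"
    using assms by (intro exI[of _ "[G1,G2]"]) simp
next
  fix n assume "\<exists>gs. length gs = n \<and> (P_ideal :: 'a fps3 set) = ideal_of_list gs"
  then obtain gs where gs: "length gs = n" "ideal_of_list [G1, G2] = ideal_of_list (gs :: 'a fps3 list)"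
    using assms by auto
  show "2 \<le> n"
  proof (rule ccontr)
    assume "\<not> 2 \<le> n"
    then have "n = 0 \<or> n = 1" by auto
    then show False
    proof
      assume "n = 0"
      then have "gs = []" using gs by simp
      have "G1 \<in> ideal_of_list [G1, G2]" using ideal2_mem[of 1 0] by simp
      then have "G1 \<in> ideal_of_list ([] :: 'a fps3 list)" using gs \<open>gs = []\<close> by metis
      then have "G1 = (0::'a fps3)" by (simp add: ideal_of_list_def)
      with G1_nz[where 'a='a] show False by simp
    next
      assume "n = 1"
      then obtain f where "gs = [f]" using gs by (cases gs) auto
      then show False using not_principal gs by blast
    qed
  qed
qed

theorem mainTheorem6:
  fixes g1 g2 :: "'a::field fps3"
  assumes "CHAR('a) = 2"
    and "g1 = Z3^2 + X3^2 * Y3 + Y3^5 * Z3^3"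
    and "g2 = Y3^3 + X3^4 + Y3^3 * Z3^5 + X3^2 * Y3^4 * Z3^3"
  shows "P_ideal = ideal_of_list [g1, g2] \<and> mu (P_ideal :: 'a fps3 set) = 2"
proof -
  have g: "g1 = G1" "g2 = G2" using assms(2,3) G1_eq G2_eq by simp_all
  have P: "(P_ideal :: 'a fps3 set) = ideal_of_list [G1, G2]" by (rule P_eq[OF assms(1)])
  show ?thesis using P mu_eq[OF P] g by simp
qed


end
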